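(* Let $u\in\mathcal B$ and let $R'(u)=\sum_{n=0}^\infty R'_n[u]$ be the (formal) generating function, where $R'_n[u]=R'[u,\dots,u]$ ($n$ arguments). Then for every $v\in\mathcal B$, $R'(u)v=v+R'(u)\big(\gamma[u\,R'(u)(u)]\,v\big)+R'(u)\big(\Lambda(u\otimes v)\big)$, as an identity of formal series (i.e. comparing the terms of each homogeneous degree in $u$).
   Context: Let $\mathcal B$ be a unital $*$-algebra with star-linear maps $\gamma:\mathcal B\to\mathcal B$ and $\Lambda:\mathcal B\otimes_{alg}\mathcal B\to\mathcal B$. The linear operators $R'[u_1,\dots,u_k]$ on $\mathcal B$ ($k\ge0$) are defined recursively: $R'[\emptyset]=\mathrm{id}_{\mathcal B}$, and $R'[u_1,\dots,u_k]=\sum_{\pi\in\mathrm{Int}(k)}w(V_1)\circ\cdots\circ w(V_m)$, where $\mathrm{Int}(k)$ is the set of interval partitions of $\{1,\dots,k\}$, $V_1,\dots,V_m$ are the blocks of $\pi$ from left to right, $w(\{i\})$ is $v\mapsto\Lambda(u_i\otimes v)$, and for a block $V=\{p,\dots,q\}$ with $q>p$, $w(V)$ is left multiplication by $\gamma\big[u_p\,R'[u_{p+1},\dots,u_{q-1}](u_q)\big]$. *)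

theory Defs
  imports Complex_Main
begin

definition unital_star_algebra ::
  "(complex \<Rightarrow> 'b::{ring,monoid_mult} \<Rightarrow> 'b) \<Rightarrow> ('b \<Rightarrow> 'b) \<Rightarrow> bool" where
  "unital_star_algebra scale st \<longleftrightarrow>
     module scale \<and>
     (\<forall>c x y. scale c (x * y) = scale c x * y) \<and>
     (\<forall>c x y. scale c (x * y) = x * scale c y) \<and>
     (\<forall>x y. st (x + y) = st x + st y) \<and>
     (\<forall>c x. st (scale c x) = scale (cnj c) (st x)) \<and>
     (\<forall>x y. st (x * y) = st y * st x) \<and>
     (\<forall>x. st (st x) = x)"

definition star_linear ::
  "(complex \<Rightarrow> 'b::{ring,monoid_mult} \<Rightarrow> 'b) \<Rightarrow> ('b \<Rightarrow> 'b) \<Rightarrow> ('b \<Rightarrow> 'b) \<Rightarrow> bool" where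
  "star_linear scale st f \<longleftrightarrow>
     Vector_Spaces.linear scale scale f \<and> (\<forall>x. f (st x) = st (f x))"

text \<open>Star-linear map B \<otimes>_alg B \<rightarrow> B, given by its values on elementary tensors:
  a bilinear map \<Lambda>(x \<otimes> y) = L x y, compatible with the involution
  (x \<otimes> y)* = x* \<otimes> y*.\<close>
definition star_bilinear ::
  "(complex \<Rightarrow> 'b::{ring,monoid_mult} \<Rightarrow> 'b) \<Rightarrow> ('b \<Rightarrow> 'b) \<Rightarrow> ('b \<Rightarrow> 'b \<Rightarrow> 'b) \<Rightarrow> bool" where
  "star_bilinear scale st L \<longleftrightarrow>
     (\<forall>y. Vector_Spaces.linear scale scale (\<lambda>x. L x y)) \<and>
     (\<forall>x. Vector_Spaces.linear scale scale (\<lambda>y. L x y)) \<and>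
     (\<forall>x y. L (st x) (st y) = st (L x y))"

definition interval_partitions :: "'a list \<Rightarrow> 'a list list set" where
  "interval_partitions us = {ps. concat ps = us \<and> (\<forall>b\<in>set ps. b \<noteq> [])}"

lemma interval_partitions_block_length:
  "ps \<in> interval_partitions us \<Longrightarrow> b \<in> set ps \<Longrightarrow> length b \<le> length us"
proof -
  assume a: "ps \<in> interval_partitions us" "b \<in> set ps"
  then obtain xs ys where "ps = xs @ b # ys" by (meson split_list)
  with a show ?thesis unfolding interval_partitions_def by auto
qed

text \<open>The operators R'[u_1,\<dots>,u_k]; gam = \<gamma>, L x y = \<Lambda>(x \<otimes> y).\<close>
function Rp :: "('b::{ring,monoid_mult} \<Rightarrow> 'b) \<Rightarrow> ('b \<Rightarrow> 'b \<Rightarrow> 'b) \<Rightarrow> 'b list \<Rightarrow> 'b \<Rightarrow> 'b" where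
  "Rp gam L us v =
     (if us = [] then v
      else (\<Sum>ps \<in> interval_partitions us.
              foldr (\<circ>)
                (map (\<lambda>b. if length b = 1 then (\<lambda>x. L (hd b) x)
                          else (\<lambda>x. gam (hd b * Rp gam L (butlast (tl b)) (last b)) * x)) ps)
                id v))"
  by pat_completeness auto
termination
proof (relation "measure (\<lambda>(gam, L, us, v). length us)")
  show "wf (measure (\<lambda>(gam, L, us, v). length us))" by simp
next
  fix gam :: "'b::{ring,monoid_mult} \<Rightarrow> 'b" and L us v ps b
  assume "us \<noteq> []" "ps \<in> interval_partitions us" "b \<in> set ps" "length b \<noteq> 1"
  then have "length b \<le> length us" "b \<noteq> []"
    using interval_partitions_block_length[of ps us b] unfolding interval_partitions_def by auto
  then show "((gam, L, butlast (tl b), last b), gam, L, us, v)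
             \<in> measure (\<lambda>(gam, L, us, v). length us)" by (cases b) auto
qed

end

theory Submission
  imports Defs
begin

declare Rp.simps[simp del]

definition Wb :: "('b::{ring,monoid_mult} \<Rightarrow> 'b) \<Rightarrow> ('b \<Rightarrow> 'b \<Rightarrow> 'b) \<Rightarrow> 'b list \<Rightarrow> 'b \<Rightarrow> 'b" where
  "Wb gam L b = (if length b = 1 then (\<lambda>x. L (hd b) x)
                          else (\<lambda>x. gam (hd b * Rp gam L (butlast (tl b)) (last b)) * x))"

lemma IP_nil: "interval_partitions [] = {[]}"
  unfolding interval_partitions_def by auto

lemma Rp_alt: "Rp gam L us v = (\<Sum>ps \<in> interval_partitions us. foldr (\<circ>) (map (Wb gam L) ps) id v)"
proof (cases "us = []")
  case True
  then show ?thesis by (simp add: IP_nil Rp.simps)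
next
  case False
  then show ?thesis by (subst Rp.simps) (simp add: Wb_def[abs_def])
qed

lemma IP_finite: "finite (interval_partitions us)"
proof -
  let ?A = "{b. set b \<subseteq> set us \<and> length b \<le> length us}"
  have fA: "finite ?A" by (rule finite_lists_length_le) simp
  have len: "length ps \<le> length (concat ps)" if "\<forall>b\<in>set ps. b \<noteq> []" for ps :: "'a list list"
    using that
  proof (induction ps)
    case (Cons a ps)
    then have "length a \<ge> 1" "length ps \<le> length (concat ps)" by (auto simp: Suc_le_eq)
    then show ?case by simp
  qed simp
  have "interval_partitions us \<subseteq> {ps. set ps \<subseteq> ?A \<and> length ps \<le> length us}"
  proof
    fix ps assume a: "ps \<in> interval_partitions us"
    then have "\<forall>b\<in>set ps. set b \<subseteq> set us"
      unfolding interval_partitions_def by auto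
    moreover have "\<forall>b\<in>set ps. length b \<le> length us"
      using interval_partitions_block_length[OF a] by auto
    moreover have "length ps \<le> length us" using a len unfolding interval_partitions_def by auto
    ultimately show "ps \<in> {ps. set ps \<subseteq> ?A \<and> length ps \<le> length us}" by auto
  qed
  moreover have "finite {ps. set ps \<subseteq> ?A \<and> length ps \<le> length us}"
    by (rule finite_lists_length_le[OF fA])
  ultimately show ?thesis by (rule finite_subset)
qed

lemma foldr_comp: "foldr (\<circ>) fs g = foldr (\<circ>) fs id \<circ> g"
  by (induction fs) auto

lemma IP_decomp:
  assumes "us \<noteq> []"
  shows "interval_partitions us =
    (\<lambda>(m, ps). ps @ [drop (length us - m) us]) ` (SIGMA m:{1..length us}. interval_partitions (take (length us - m) us))"
  (is "_ = ?R")
proof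
  show "interval_partitions us \<subseteq> ?R" (is "_ \<subseteq> ?R")
  proof
    fix ps assume a: "ps \<in> interval_partitions us"
    have "ps \<noteq> []" using a assms unfolding interval_partitions_def by auto
    then obtain qs b where ps: "ps = qs @ [b]" by (metis rev_exhaust)
    have cc: "concat qs @ b = us" and ne: "b \<noteq> []" "\<forall>c\<in>set qs. c \<noteq> []"
      using a unfolding interval_partitions_def ps by auto
    define m where "m = length b"
    have m: "m \<in> {1..length us}" using cc ne(1) unfolding m_def by (auto simp: Suc_le_eq) 
    have "length us - m = length (concat qs)" using cc unfolding m_def by auto
    then have "take (length us - m) us = concat qs" "drop (length us - m) us = b"
      using cc by (metis append_eq_conv_conj)+
    then have "qs \<in> interval_partitions (take (length us - m) us)"
      using ne unfolding interval_partitions_def by auto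
    then show "ps \<in> ?R" using m ps \<open>drop (length us - m) us = b\<close>
      by (auto intro!: image_eqI[where x="(m, qs)"])
  qed
next
  show "?R \<subseteq> interval_partitions us" (is "?R \<subseteq> _")
  proof
    fix x assume "x \<in> ?R"
    then obtain m qs where m: "m \<in> {1..length us}" and q: "qs \<in> interval_partitions (take (length us - m) us)"
      and x: "x = qs @ [drop (length us - m) us]" by auto
    show "x \<in> interval_partitions us" using m q unfolding x interval_partitions_def by auto
  qed
qed

lemma Rp_last:
  assumes "us \<noteq> []"
  shows "Rp gam L us v = (\<Sum>m\<in>{1..length us}. Rp gam L (take (length us - m) us) (Wb gam L (drop (length us - m) us) v))"
proof -
  have inj: "inj_on (\<lambda>(m, ps). ps @ [drop (length us - m) us]) (SIGMA m:{1..length us}. interval_partitions (take (length us - m) us))"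
  proof (rule inj_onI)
    have key: "m = m'" if "m \<in> {1..length us}" "m' \<in> {1..length us}"
      "drop (length us - m) us = drop (length us - m') us" for m m'
    proof -
      have "length (drop (length us - m) us) = length (drop (length us - m') us)" using that(3) by simp
      then show ?thesis using that(1,2) by auto
    qed
    fix x y assume "x \<in> (SIGMA m:{1..length us}. interval_partitions (take (length us - m) us))"
      "y \<in> (SIGMA m:{1..length us}. interval_partitions (take (length us - m) us))"
      and e: "(\<lambda>(m, ps). ps @ [drop (length us - m) us]) x = (\<lambda>(m, ps). ps @ [drop (length us - m) us]) y"
    then show "x = y" using key by (cases x; cases y) auto
  qed
  have "Rp gam L us v = (\<Sum>ps \<in> interval_partitions us. foldr (\<circ>) (map (Wb gam L) ps) id v)"
    by (rule Rp_alt)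
  also have "\<dots> = (\<Sum>x \<in> (SIGMA m:{1..length us}. interval_partitions (take (length us - m) us)).
        foldr (\<circ>) (map (Wb gam L) ((\<lambda>(m, ps). ps @ [drop (length us - m) us]) x)) id v)"
    by (rule sum.reindex_cong[OF inj IP_decomp[OF assms]]) simp
  also have "\<dots> = (\<Sum>m\<in>{1..length us}. \<Sum>ps\<in>interval_partitions (take (length us - m) us).
        foldr (\<circ>) (map (Wb gam L) (ps @ [drop (length us - m) us])) id v)"
    by (subst sum.Sigma) (simp_all add: IP_finite split_def)
  also have "\<dots> = (\<Sum>m\<in>{1..length us}. Rp gam L (take (length us - m) us) (Wb gam L (drop (length us - m) us) v))"
    apply (rule sum.cong[OF refl])
    apply (subst Rp_alt)
    apply (rule sum.cong[OF refl])
    apply (simp)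
    apply (subst foldr_comp)
    apply simp
    done
  finally show ?thesis .
qed

theorem theorem3p13:
  fixes scale :: "complex \<Rightarrow> 'b::{ring,monoid_mult} \<Rightarrow> 'b"
    and st :: "'b \<Rightarrow> 'b" and gam :: "'b \<Rightarrow> 'b" and L :: "'b \<Rightarrow> 'b \<Rightarrow> 'b"
    and u v :: 'b and n :: nat
  assumes "unital_star_algebra scale st"
    and "star_linear scale st gam"
    and "star_bilinear scale st L"
  shows "Rp gam L (replicate n u) v =
           (if n = 0 then v else 0)
         + (\<Sum>(k, j) \<in> {(k, j). k + j + 2 = n}.
              Rp gam L (replicate k u) (gam (u * Rp gam L (replicate j u) u) * v))
         + (if n \<ge> 1 then Rp gam L (replicate (n - 1) u) (L u v) else 0)"
proof (cases "n = 0")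
  case True
  have S: "{(k, j). k + j + 2 = (0::nat)} = {}" by auto
  show ?thesis using True by (simp add: Rp.simps S)
next
  case False
  let ?f = "\<lambda>m. Rp gam L (replicate (n - m) u) (Wb gam L (replicate m u) v)"
  have "Rp gam L (replicate n u) v = (\<Sum>m\<in>{1..n}. ?f m)"
    using False by (subst Rp_last) (auto simp: take_replicate drop_replicate intro!: sum.cong)
  also have "{1..n} = insert 1 {2..n}" using False by auto
  also have "(\<Sum>m\<in>insert 1 {2..n}. ?f m) = ?f 1 + (\<Sum>m\<in>{2..n}. ?f m)"
    by (rule sum.insert) auto
  also have "?f 1 = Rp gam L (replicate (n - 1) u) (L u v)" by (simp add: Wb_def)
  also have "(\<Sum>m\<in>{2..n}. ?f m) = (\<Sum>(k, j) \<in> {(k, j). k + j + 2 = n}.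
              Rp gam L (replicate k u) (gam (u * Rp gam L (replicate j u) u) * v))"
  proof (rule sum.reindex_bij_witness[where i="\<lambda>(k,j). j + 2" and j="\<lambda>m. (n - m, m - 2)"])
    fix m assume m: "m \<in> {2..n}"
    show "(case (n - m, m - 2) of (k, j) \<Rightarrow> j + 2) = m" using m by auto
    show "(n - m, m - 2) \<in> {(k, j). k + j + 2 = n}" using m by auto
    have rep: "replicate m u = u # replicate (m - 2) u @ [u]" using m
      by (metis (no_types, lifting) Suc_diff_le atLeastAtMost_iff diff_Suc_Suc numeral_2_eq_2
          replicate_Suc replicate_append_same diff_zero le_imp_less_Suc less_imp_le_nat Suc_le_lessD)
    show "(case (n - m, m - 2) of (k, j) \<Rightarrow>
            Rp gam L (replicate k u) (gam (u * Rp gam L (replicate j u) u) * v)) = ?f m"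
      using m by (simp add: Wb_def rep)
  next
    fix a assume "a \<in> {(k, j). k + j + 2 = n}"
    then show "(n - (case a of (k, j) \<Rightarrow> j + 2), (case a of (k, j) \<Rightarrow> j + 2) - 2) = a"
      and "(case a of (k, j) \<Rightarrow> j + 2) \<in> {2..n}" by auto
  qed
  finally show ?thesis using False by (simp add: add.commute)
qed

end
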